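(* Let $A\in\mathbb{R}_+^{n\times n}$ and let $x\in\mathbb{R}_+^n$ be a Perron eigenvector of $A$. Then: (1) if for all $1\le i,j,k\le n$, $x_k<x_j$ implies $a_{i,k}\le a_{i,j}$, then $\rho(A)=\max_{B\in\Omega(A)}\rho(B)$; (2) if for all $1\le i,j,k\le n$, $x_k<x_j$ implies $a_{i,k}\ge a_{i,j}$, then $\rho(A)=\min_{B\in\Omega(A)}\rho(B)$.
   Context: For $A=(a_{i,j})\in\mathbb{R}_+^{n\times n}$ (nonnegative $n\times n$ matrices), $\Omega(A)=\{B\in\mathbb{R}_+^{n\times n}:\ \forall i\ \exists\text{ a permutation }\phi_i\text{ of }\{1,\dots,n\}\text{ with } b_{i,j}=a_{i,\phi_i(j)}\ \forall j\}$. $\rho(B)$ denotes the spectral radius (Perron root) of $B$. A Perron eigenvector of $A$ is a nonzero nonnegative vector $x$ with $Ax=\rho(A)x$. *)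

theory Defs
  imports "Jordan_Normal_Form.Spectral_Radius"
begin

(* n x n real matrices are Jordan_Normal_Form matrices in carrier_mat n n; indices 0..<n *)

definition nonneg_mat :: "real mat \<Rightarrow> bool" where
  "nonneg_mat A \<longleftrightarrow> (\<forall>i<dim_row A. \<forall>j<dim_col A. A $$ (i,j) \<ge> 0)"

definition rho :: "real mat \<Rightarrow> real" where
  "rho B = spectral_radius (map_mat complex_of_real B)"

definition Omega :: "nat \<Rightarrow> real mat \<Rightarrow> real mat set" where
  "Omega n A = {B. B \<in> carrier_mat n n \<and>
     (\<forall>i<n. \<exists>\<phi>. \<phi> permutes {..<n} \<and> (\<forall>j<n. B $$ (i,j) = A $$ (i, \<phi> j)))}"

definition perron_eigenvector :: "nat \<Rightarrow> real mat \<Rightarrow> real vec \<Rightarrow> bool" where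
  "perron_eigenvector n A x \<longleftrightarrow> x \<in> carrier_vec n \<and> x \<noteq> 0\<^sub>v n \<and>
     (\<forall>i<n. x $ i \<ge> 0) \<and> A *\<^sub>v x = rho A \<cdot>\<^sub>v x"

end

theory Submission imports Defs begin

lemma rearr_aux:
  fixes f g :: "nat \<Rightarrow> real"
  assumes "card {j\<in>I. \<phi> j \<noteq> j} = N" "finite I" "\<phi> permutes I"
    "\<forall>j\<in>I. \<forall>k\<in>I. g k < g j \<longrightarrow> f k \<le> f j"
  shows "(\<Sum>j\<in>I. f (\<phi> j) * g j) \<le> (\<Sum>j\<in>I. f j * g j)"
  using assms(1,3)
proof (induction N arbitrary: \<phi> rule: less_induct)
  case (less N \<phi>)
  define NF where "NF = {j\<in>I. \<phi> j \<noteq> j}"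
  have finNF: "finite NF" using assms(2) NF_def by auto
  show ?case
  proof (cases "NF = {}")
    case True
    then have "\<forall>j\<in>I. \<phi> j = j" unfolding NF_def by auto
    then show ?thesis by simp
  next
    case False
    define M where "M = Max (g ` NF)"
    define NF' where "NF' = {j\<in>NF. g j = M}"
    have "M \<in> g ` NF" unfolding M_def using False finNF by simp
    then have NF'ne: "NF' \<noteq> {}" unfolding NF'_def by auto
    have finNF': "finite NF'" using finNF NF'_def by auto
    have "Max (f ` NF') \<in> f ` NF'" using NF'ne finNF' by simp
    then obtain m where m: "m \<in> NF'" "f m = Max (f ` NF')" by auto
    have mI: "m \<in> I" "\<phi> m \<noteq> m" "g m = M" using m NF'_def NF_def by auto
    define pp where "pp = \<phi> m"
    define qq where "qq = Hilbert_Choice.inv \<phi> m"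
    have perm: "\<phi> permutes I" by fact
    have ppI: "pp \<in> I" using mI perm pp_def by (simp add: permutes_in_image)
    have qqI: "qq \<in> I" using mI permutes_inv[OF perm] qq_def by (simp add: permutes_in_image)
    have phq: "\<phi> qq = m" using qq_def permutes_inverses[OF perm] by simp
    have qm: "qq \<noteq> m" using phq mI by auto
    have pm: "pp \<noteq> m" using mI pp_def by auto
    have qNF: "qq \<in> NF" using qqI phq qm NF_def by auto
    have pNF: "pp \<in> NF"
    proof -
      have "\<phi> pp \<noteq> pp"
      proof
        assume "\<phi> pp = pp"
        then have "\<phi> pp = \<phi> m" using pp_def by simp
        then have "pp = m" using permutes_inj[OF perm] by (simp add: inj_eq)
        then show False using pm by simp
      qed
      then show ?thesis using ppI NF_def by auto
    qed
    have gq: "g qq \<le> g m" using qNF mI M_def finNF by auto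
    have fp: "f pp \<le> f m"
    proof (cases "g pp < g m")
      case True then show ?thesis using assms(4) ppI mI by auto
    next
      case False
      have "g pp \<le> M" unfolding M_def using pNF finNF by simp
      then have "g pp = M" using False mI by linarith
      then have "pp \<in> NF'" using pNF NF'_def by auto
      then show ?thesis using m finNF' by simp
    qed
    define \<psi> where "\<psi> = \<phi> \<circ> transpose m qq"
    have psiperm: "\<psi> permutes I" unfolding \<psi>_def
      by (rule permutes_compose[OF permutes_swap_id[OF mI(1) qqI] perm])
    have psim: "\<psi> m = m" using phq by (simp add: \<psi>_def)
    have psiq: "\<psi> qq = pp" using pp_def by (simp add: \<psi>_def)
    have psio: "\<psi> j = \<phi> j" if "j \<noteq> m" "j \<noteq> qq" for j
      using that by (simp add: \<psi>_def transpose_apply_other)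
    have sub: "{j\<in>I. \<psi> j \<noteq> j} \<subset> NF"
    proof
      show "{j\<in>I. \<psi> j \<noteq> j} \<subseteq> NF"
      proof
        fix j assume j: "j \<in> {j\<in>I. \<psi> j \<noteq> j}"
        then show "j \<in> NF"
        proof (cases "j = m \<or> j = qq")
          case True then show ?thesis using j psim qNF by auto
        next
          case False then show ?thesis using j psio NF_def by auto
        qed
      qed
      show "{j\<in>I. \<psi> j \<noteq> j} \<noteq> NF" using psim m NF'_def by auto
    qed
    have lt: "card {j\<in>I. \<psi> j \<noteq> j} < N"
      using psubset_card_mono[OF finNF sub] less.prems NF_def by simp
    have IH: "(\<Sum>j\<in>I. f (\<psi> j) * g j) \<le> (\<Sum>j\<in>I. f j * g j)"
      using less.IH[OF lt refl psiperm] .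
    have split: "(\<Sum>j\<in>I. h j) = h m + h qq + (\<Sum>j\<in>I - {m} - {qq}. h j)" for h :: "nat \<Rightarrow> real"
    proof -
      have "(\<Sum>j\<in>I. h j) = h m + (\<Sum>j\<in>I - {m}. h j)"
        by (rule sum.remove[OF assms(2) mI(1)])
      also have "(\<Sum>j\<in>I - {m}. h j) = h qq + (\<Sum>j\<in>I - {m} - {qq}. h j)"
        by (rule sum.remove) (use assms(2) qqI qm in auto)
      finally show ?thesis by simp
    qed
    have same: "(\<Sum>j\<in>I - {m} - {qq}. f (\<phi> j) * g j) = (\<Sum>j\<in>I - {m} - {qq}. f (\<psi> j) * g j)"
      using psio by (intro sum.cong) auto
    have "(\<Sum>j\<in>I. f (\<phi> j) * g j) = (\<Sum>j\<in>I. f (\<psi> j) * g j) + (f pp - f m) * (g m - g qq)"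
      using split[of "\<lambda>j. f (\<phi> j) * g j"] split[of "\<lambda>j. f (\<psi> j) * g j"] same psim psiq phq pp_def
      by (simp add: algebra_simps)
    moreover have "(f pp - f m) * (g m - g qq) \<le> 0"
      using fp gq by (simp add: mult_nonpos_nonneg)
    ultimately show ?thesis using IH by linarith
  qed
qed

lemma mv_index:
  fixes B :: "'a::semiring_0 mat"
  assumes "B \<in> carrier_mat n n" "x \<in> carrier_vec n" "i < n"
  shows "(B *\<^sub>v x) $ i = (\<Sum>j<n. B $$ (i,j) * x $ j)"
  using assms by (simp add: scalar_prod_def atLeast0LessThan)

lemma pow_mat_Suc_left:
  fixes B :: "'a::semiring_1 mat"
  assumes "B \<in> carrier_mat n n"
  shows "B ^\<^sub>m Suc k = B * B ^\<^sub>m k"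
proof (induction k)
  case 0 then show ?case using assms by simp
next
  case (Suc k)
  have "B ^\<^sub>m Suc (Suc k) = B ^\<^sub>m Suc k * B" by simp
  also have "\<dots> = (B * B ^\<^sub>m k) * B" using Suc by simp
  also have "\<dots> = B * (B ^\<^sub>m k * B)" using assms by (intro assoc_mult_mat) auto
  finally show ?case by simp
qed

lemma rho_nonneg:
  assumes "B \<in> carrier_mat n n" "n > 0"
  shows "rho B \<ge> 0"
proof -
  have "map_mat complex_of_real B \<in> carrier_mat n n" using assms by simp
  from spectral_radius_mem_max(1)[OF this assms(2)] show ?thesis
    unfolding rho_def by auto
qed


lemma rho_ge:
  fixes B :: "real mat" and x :: "real vec"
  assumes B: "B \<in> carrier_mat n n" and Bnn: "\<And>i j. i<n \<Longrightarrow> j<n \<Longrightarrow> B $$ (i,j) \<ge> 0"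
    and x: "x \<in> carrier_vec n" and xnn: "\<And>i. i<n \<Longrightarrow> x $ i \<ge> 0"
    and j0: "j0 < n" "x $ j0 > 0"
    and Bx: "\<And>i. i<n \<Longrightarrow> r * x $ i \<le> (B *\<^sub>v x) $ i"
  shows "r \<le> rho B"
proof (rule ccontr)
  assume "\<not> r \<le> rho B"
  then have lt: "rho B < r" by simp
  have n: "n > 0" using j0 by auto
  have rB0: "rho B \<ge> 0" by (rule rho_nonneg[OF B n])
  define r' where "r' = (rho B + r) / 2"
  have r'pos: "r' > 0" "rho B < r'" "r' < r" using lt rB0 r'_def by auto
  define c where "c = 1 / r'"
  have cpos: "c > 0" using r'pos c_def by simp
  define Br where "Br = c \<cdot>\<^sub>m B"
  have Br: "Br \<in> carrier_mat n n" using B Br_def by simp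
  have Brnn: "Br $$ (i,j) \<ge> 0" if "i<n" "j<n" for i j
    using Bnn[OF that] cpos B that Br_def by simp
  define Cc where "Cc = map_mat complex_of_real Br"
  have Cc: "Cc \<in> carrier_mat n n" using Br Cc_def by simp
  define Bc where "Bc = map_mat complex_of_real B"
  have Bc: "Bc \<in> carrier_mat n n" using B Bc_def by simp
  have srC: "spectral_radius Cc < 1"
  proof -
    from spectral_radius_mem_max(1)[OF Cc n]
    obtain lam where lam: "lam \<in> spectrum Cc" "spectral_radius Cc = cmod lam" by auto
    then obtain v where ev: "eigenvector Cc v lam"
      unfolding spectrum_def eigenvalue_def by auto
    have v: "v \<in> carrier_vec n" "v \<noteq> 0\<^sub>v n" "Cc *\<^sub>v v = lam \<cdot>\<^sub>v v"
      using ev Cc unfolding eigenvector_def by auto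
    have "Bc *\<^sub>v v = (lam / complex_of_real c) \<cdot>\<^sub>v v"
    proof (rule eq_vecI)
      fix i assume "i < dim_vec ((lam / complex_of_real c) \<cdot>\<^sub>v v)"
      then have i: "i < n" using v by simp
      have "(Cc *\<^sub>v v) $ i = complex_of_real c * (Bc *\<^sub>v v) $ i"
        unfolding mv_index[OF Cc v(1) i] mv_index[OF Bc v(1) i]
        using Br_def Cc_def Bc_def B i by (simp add: sum_distrib_left algebra_simps)
      then have "complex_of_real c * (Bc *\<^sub>v v) $ i = lam * v $ i" using v i by simp
      then show "(Bc *\<^sub>v v) $ i = ((lam / complex_of_real c) \<cdot>\<^sub>v v) $ i"
        using cpos i v by (simp add: field_simps)
    qed (use v Bc in auto)
    then have "eigenvector Bc v (lam / complex_of_real c)"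
      unfolding eigenvector_def using v Bc by auto
    then have "lam / complex_of_real c \<in> spectrum Bc"
      unfolding spectrum_def eigenvalue_def by auto
    from spectral_radius_mem_max(2)[OF Bc n imageI[OF this, of norm]]
    have "cmod lam / c \<le> rho B" unfolding rho_def Bc_def using cpos by (simp add: norm_divide)
    then have "cmod lam \<le> c * rho B" using cpos by (simp add: divide_le_eq mult.commute)
    also have "\<dots> < c * r'" using cpos r'pos by simp
    also have "\<dots> = 1" using c_def r'pos by simp
    finally show ?thesis using lam by simp
  qed
  from spectral_radius_jnf_norm_bound_less_1_upper_triangular[OF Cc srC]
  obtain K where K: "\<And>k. norm_bound (Cc ^\<^sub>m k) K" by auto
  have Kb: "\<bar>(Br ^\<^sub>m k) $$ (i,j)\<bar> \<le> K" if "i<n" "j<n" for i j k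
  proof -
    have "Cc ^\<^sub>m k = map_mat complex_of_real (Br ^\<^sub>m k)"
      unfolding Cc_def by (rule of_real_hom.mat_hom_pow[OF Br, symmetric])
    with K[of k] that Br show ?thesis unfolding norm_bound_def by auto
  qed
  define q where "q = c * r"
  have "q = r / r'" unfolding q_def c_def by simp
  then have q1: "q > 1" using r'pos by simp
  have grow: "\<forall>i<n. q ^ k * x $ i \<le> (Br ^\<^sub>m k *\<^sub>v x) $ i" for k
  proof (induction k)
    case 0 then show ?case using x Br by simp
  next
    case (Suc k)
    show ?case
    proof (intro allI impI)
      fix i assume i: "i < n"
      have Pk: "Br ^\<^sub>m k \<in> carrier_mat n n" using Br by simp
      have "(Br ^\<^sub>m Suc k *\<^sub>v x) = Br *\<^sub>v (Br ^\<^sub>m k *\<^sub>v x)"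
        unfolding pow_mat_Suc_left[OF Br] by (rule assoc_mult_mat_vec[OF Br Pk x])
      then have "(Br ^\<^sub>m Suc k *\<^sub>v x) $ i = (\<Sum>j<n. Br $$ (i,j) * (Br ^\<^sub>m k *\<^sub>v x) $ j)"
        using mv_index[OF Br _ i, of "Br ^\<^sub>m k *\<^sub>v x"] Pk x by simp
      also have "\<dots> \<ge> (\<Sum>j<n. Br $$ (i,j) * (q ^ k * x $ j))"
        using Suc Brnn[OF i] by (intro sum_mono mult_left_mono) auto
      finally have 1: "(\<Sum>j<n. Br $$ (i,j) * (q ^ k * x $ j)) \<le> (Br ^\<^sub>m Suc k *\<^sub>v x) $ i" .
      have "(\<Sum>j<n. Br $$ (i,j) * (q ^ k * x $ j)) = q ^ k * (c * (\<Sum>j<n. B $$ (i,j) * x $ j))"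
        using B i Br_def by (simp add: sum_distrib_left algebra_simps)
      also have "(\<Sum>j<n. B $$ (i,j) * x $ j) = (B *\<^sub>v x) $ i" using mv_index[OF B x i] by simp
      finally have 2: "(\<Sum>j<n. Br $$ (i,j) * (q ^ k * x $ j)) = q ^ k * (c * (B *\<^sub>v x) $ i)" .
      have "q ^ Suc k * x $ i = q ^ k * (c * (r * x $ i))" unfolding q_def by (simp add: algebra_simps)
      also have "\<dots> \<le> q ^ k * (c * (B *\<^sub>v x) $ i)"
        using Bx[OF i] cpos q1 by (intro mult_left_mono) auto
      finally show "q ^ Suc k * x $ i \<le> (Br ^\<^sub>m Suc k *\<^sub>v x) $ i" using 1 2 by simp
    qed
  qed
  define D where "D = (\<Sum>j<n. K * x $ j)"
  have bound: "q ^ k * x $ j0 \<le> D" for k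
  proof -
    have Pk: "Br ^\<^sub>m k \<in> carrier_mat n n" using Br by simp
    have "q ^ k * x $ j0 \<le> (Br ^\<^sub>m k *\<^sub>v x) $ j0" using grow j0 by simp
    also have "\<dots> = (\<Sum>j<n. (Br ^\<^sub>m k) $$ (j0,j) * x $ j)" by (rule mv_index[OF Pk x j0(1)])
    also have "\<dots> \<le> D" unfolding D_def
    proof (intro sum_mono)
      fix j assume "j \<in> {..<n}"
      then have j: "j < n" by simp
      have "(Br ^\<^sub>m k) $$ (j0,j) * x $ j \<le> \<bar>(Br ^\<^sub>m k) $$ (j0,j)\<bar> * x $ j"
        using xnn[OF j] by (intro mult_right_mono) auto
      also have "\<dots> \<le> K * x $ j" using Kb[OF j0(1) j] xnn[OF j] by (intro mult_right_mono) auto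
      finally show "(Br ^\<^sub>m k) $$ (j0,j) * x $ j \<le> K * x $ j" .
    qed
    finally show ?thesis .
  qed
  obtain k where "D / x $ j0 < q ^ k" using real_arch_pow[OF q1] by blast
  then have "D < q ^ k * x $ j0" using j0 by (simp add: divide_less_eq)
  with bound[of k] show False by simp
qed


lemma rho_le:
  fixes B :: "real mat" and x :: "real vec"
  assumes B: "B \<in> carrier_mat n n" and Bnn: "\<And>i j. i<n \<Longrightarrow> j<n \<Longrightarrow> B $$ (i,j) \<ge> 0"
    and x: "x \<in> carrier_vec n" and xnn: "\<And>i. i<n \<Longrightarrow> x $ i \<ge> 0"
    and j0: "j0 < n" "x $ j0 > 0"
    and Bx: "\<And>i. i<n \<Longrightarrow> (B *\<^sub>v x) $ i \<le> r * x $ i"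
    and zr: "\<And>i j. i<n \<Longrightarrow> j<n \<Longrightarrow> x $ i = 0 \<Longrightarrow> B $$ (i,j) = 0"
  shows "rho B \<le> r"
proof -
  have n: "n > 0" using j0 by auto
  define Bc where "Bc = map_mat complex_of_real B"
  have Bc: "Bc \<in> carrier_mat n n" using B Bc_def by simp
  have r0: "r \<ge> 0"
  proof -
    have "0 \<le> (\<Sum>j<n. B $$ (j0,j) * x $ j)" using Bnn xnn j0
      by (intro sum_nonneg) auto
    then have "0 \<le> (B *\<^sub>v x) $ j0" using mv_index[OF B x j0(1)] by simp
    then have "0 \<le> r * x $ j0" using Bx[OF j0(1)] by linarith
    then show ?thesis using j0 by (simp add: zero_le_mult_iff)
  qed
  from spectral_radius_mem_max(1)[OF Bc n]
  obtain lam where lam: "lam \<in> spectrum Bc" "rho B = cmod lam"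
    unfolding rho_def Bc_def by auto
  then obtain v where ev: "eigenvector Bc v lam"
    unfolding spectrum_def eigenvalue_def by auto
  have v: "v \<in> carrier_vec n" "v \<noteq> 0\<^sub>v n" "Bc *\<^sub>v v = lam \<cdot>\<^sub>v v"
    using ev Bc unfolding eigenvector_def by auto
  define mu where "mu = cmod lam"
  define w where "w = (\<lambda>i. cmod (v $ i))"
  have ineq: "mu * w i \<le> (\<Sum>j<n. B $$ (i,j) * w j)" if i: "i < n" for i
  proof -
    have "lam * v $ i = (Bc *\<^sub>v v) $ i" using v(3) v(1) i by simp
    also have "\<dots> = (\<Sum>j<n. Bc $$ (i,j) * v $ j)" by (rule mv_index[OF Bc v(1) i])
    finally have eq: "lam * v $ i = (\<Sum>j<n. complex_of_real (B $$ (i,j)) * v $ j)"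
      using B i Bc_def by simp
    have "mu * w i = cmod (lam * v $ i)" unfolding mu_def w_def by (simp add: norm_mult)
    also have "\<dots> \<le> (\<Sum>j<n. cmod (complex_of_real (B $$ (i,j)) * v $ j))"
      unfolding eq by (rule norm_sum)
    also have "\<dots> = (\<Sum>j<n. B $$ (i,j) * w j)"
      using Bnn[OF i] unfolding w_def by (intro sum.cong) (auto simp: norm_mult)
    finally show ?thesis .
  qed
  show ?thesis
  proof (cases "mu = 0")
    case True then show ?thesis using lam r0 mu_def by simp
  next
    case False
    then have mupos: "mu > 0" using mu_def by simp
    have wz: "w i = 0" if "i < n" "x $ i = 0" for i
    proof -
      have "mu * w i \<le> 0" using ineq[OF that(1)] zr[OF that(1) _ that(2)] by simp
      moreover have "w i \<ge> 0" unfolding w_def by simp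
      ultimately show ?thesis using mupos by (simp add: mult_le_0_iff)
    qed
    define S where "S = {i. i < n \<and> x $ i > 0}"
    have finS: "finite S" unfolding S_def by simp
    have j0S: "j0 \<in> S" using j0 S_def by simp
    define c where "c = Max ((\<lambda>i. w i / x $ i) ` S)"
    have "c \<in> (\<lambda>i. w i / x $ i) ` S" unfolding c_def using finS j0S by (intro Max_in) auto
    then obtain i0 where i0: "i0 \<in> S" "c = w i0 / x $ i0" by auto
    have i0n: "i0 < n" "x $ i0 > 0" using i0 S_def by auto
    have cge: "w i / x $ i \<le> c" if "i \<in> S" for i unfolding c_def using finS that by simp
    have c0: "c \<ge> 0" using cge[OF j0S] j0 w_def by (smt (verit) divide_nonneg_pos norm_ge_zero)
    have wle: "w j \<le> c * x $ j" if "j < n" for j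
    proof (cases "x $ j = 0")
      case True then show ?thesis using wz[OF that] by simp
    next
      case False
      then have "x $ j > 0" using xnn[OF that] by simp
      then show ?thesis using cge[of j] S_def that by (simp add: divide_le_eq mult.commute)
    qed
    obtain j1 where j1: "j1 < n" "v $ j1 \<noteq> 0"
      using v(1,2) by (metis carrier_vecD eq_vecI index_zero_vec(1) index_zero_vec(2))
    have w1: "w j1 > 0" using j1 w_def by simp
    have cpos: "c > 0"
    proof -
      have "x $ j1 \<noteq> 0" using wz[OF j1(1)] w1 by auto
      then have "x $ j1 > 0" using xnn[OF j1(1)] by simp
      then have "w j1 / x $ j1 > 0" using w1 by simp
      then show ?thesis using cge[of j1] S_def j1 \<open>x $ j1 > 0\<close> by fastforce
    qed
    have wi0: "w i0 = c * x $ i0" using i0 i0n by simp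
    have "mu * (c * x $ i0) = mu * w i0" using wi0 by simp
    also have "\<dots> \<le> (\<Sum>j<n. B $$ (i0,j) * w j)" by (rule ineq[OF i0n(1)])
    also have "\<dots> \<le> (\<Sum>j<n. B $$ (i0,j) * (c * x $ j))"
      using wle Bnn[OF i0n(1)] by (intro sum_mono mult_left_mono) auto
    also have "\<dots> = c * (B *\<^sub>v x) $ i0" using mv_index[OF B x i0n(1)]
      by (simp add: sum_distrib_left algebra_simps)
    also have "\<dots> \<le> c * (r * x $ i0)" using Bx[OF i0n(1)] cpos by simp
    finally have "mu * (c * x $ i0) \<le> r * (c * x $ i0)" by (simp add: algebra_simps)
    then have "mu \<le> r" using cpos i0n by (simp add: mult_le_cancel_right)
    then show ?thesis using lam mu_def by simp
  qed
qed


lemma rearr: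
  fixes f g :: "nat \<Rightarrow> real"
  assumes "finite I" "\<phi> permutes I" "\<forall>j\<in>I. \<forall>k\<in>I. g k < g j \<longrightarrow> f k \<le> f j"
  shows "(\<Sum>j\<in>I. f (\<phi> j) * g j) \<le> (\<Sum>j\<in>I. f j * g j)"
  using rearr_aux[OF refl assms] .

lemma Omega_finite: "finite (Omega n A)"
proof -
  define P where "P = PiE {..<n} (\<lambda>_. PiE {..<n} (\<lambda>_. {..<n::nat}))"
  define h where "h = (\<lambda>F. mat n n (\<lambda>(i,j). A $$ (i, F i j)))"
  have "Omega n A \<subseteq> h ` P"
  proof
    fix B assume B: "B \<in> Omega n A"
    then have "\<forall>i<n. \<exists>\<phi>. \<phi> permutes {..<n} \<and> (\<forall>j<n. B $$ (i,j) = A $$ (i, \<phi> j))"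
      unfolding Omega_def by auto
    then obtain \<Phi> where \<Phi>: "\<And>i. i < n \<Longrightarrow> \<Phi> i permutes {..<n} \<and> (\<forall>j<n. B $$ (i,j) = A $$ (i, \<Phi> i j))"
      by metis
    define F where "F = restrict (\<lambda>i. restrict (\<Phi> i) {..<n}) {..<n}"
    have "\<Phi> i j < n" if "i<n" "j<n" for i j
      using \<Phi>[OF that(1)] that(2) permutes_in_image by (metis lessThan_iff)
    then have "F \<in> P" unfolding P_def F_def by (auto simp: PiE_iff)
    moreover have "B = h F"
      using B \<Phi> unfolding h_def F_def Omega_def by (intro eq_matI) auto
    ultimately show "B \<in> h ` P" by auto
  qed
  moreover have "finite P" unfolding P_def by (intro finite_PiE) auto
  ultimately show ?thesis by (meson finite_surj)
qed

theorem theorem3p3: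
  fixes n :: nat and A :: "real mat" and x :: "real vec"
  assumes "A \<in> carrier_mat n n" and "nonneg_mat A"
    and "perron_eigenvector n A x"
  shows "((\<forall>i<n. \<forall>j<n. \<forall>k<n. x $ k < x $ j \<longrightarrow> A $$ (i,k) \<le> A $$ (i,j))
           \<longrightarrow> rho A = Max (rho ` Omega n A))
     \<and> ((\<forall>i<n. \<forall>j<n. \<forall>k<n. x $ k < x $ j \<longrightarrow> A $$ (i,k) \<ge> A $$ (i,j))
           \<longrightarrow> rho A = Min (rho ` Omega n A))"
proof -
  note A = assms(1)
  have Ann: "A $$ (i,j) \<ge> 0" if "i<n" "j<n" for i j
    using assms(1,2) that unfolding nonneg_mat_def by auto
  have x: "x \<in> carrier_vec n" "x \<noteq> 0\<^sub>v n" and xnn: "\<And>i. i<n \<Longrightarrow> x $ i \<ge> 0"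
    and Ax: "A *\<^sub>v x = rho A \<cdot>\<^sub>v x"
    using assms(3) unfolding perron_eigenvector_def by auto
  obtain j0 where j0': "j0 < n" "x $ j0 \<noteq> 0"
    using x by (metis carrier_vecD eq_vecI index_zero_vec(1) index_zero_vec(2))
  have j0: "j0 < n" "x $ j0 > 0" using j0' xnn[OF j0'(1)] by auto
  have Axi: "(\<Sum>j<n. A $$ (i,j) * x $ j) = rho A * x $ i" if "i<n" for i
  proof -
    have "(A *\<^sub>v x) $ i = rho A * x $ i" using Ax that x by simp
    then show ?thesis using mv_index[OF A x(1) that] by simp
  qed
  have Aom: "A \<in> Omega n A" unfolding Omega_def using A
    by (auto intro!: exI[of _ id] permutes_id)
  have finO: "finite (rho ` Omega n A)" using Omega_finite by simp
  have Om: "B \<in> carrier_mat n n \<and> (\<forall>i<n. \<exists>\<phi>. \<phi> permutes {..<n} \<and> (\<forall>j<n. B $$ (i,j) = A $$ (i, \<phi> j)))"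
    if "B \<in> Omega n A" for B using that unfolding Omega_def by auto
  have Bnn: "B $$ (i,j) \<ge> 0" if B: "B \<in> Omega n A" and i: "i<n" and j: "j<n" for B i j
  proof -
    obtain \<phi> where p: "\<phi> permutes {..<n}" "\<forall>j<n. B $$ (i,j) = A $$ (i, \<phi> j)"
      using Om[OF B] i by auto
    have "\<phi> j < n" using permutes_in_image[OF p(1), of j] j by simp
    then show ?thesis using Ann[OF i] j p by simp
  qed
  have Bxi: "\<exists>\<phi>. \<phi> permutes {..<n} \<and> (B *\<^sub>v x) $ i = (\<Sum>j<n. A $$ (i, \<phi> j) * x $ j)"
    if B: "B \<in> Omega n A" and i: "i<n" for B i
  proof -
    obtain \<phi> where \<phi>: "\<phi> permutes {..<n}" "\<forall>j<n. B $$ (i,j) = A $$ (i, \<phi> j)"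
      using Om[OF B] i by auto
    have "(B *\<^sub>v x) $ i = (\<Sum>j<n. B $$ (i,j) * x $ j)"
      using mv_index[OF _ x(1) i] Om[OF B] by auto
    also have "\<dots> = (\<Sum>j<n. A $$ (i, \<phi> j) * x $ j)" using \<phi> by (intro sum.cong) auto
    finally show ?thesis using \<phi> by blast
  qed
  show ?thesis
  proof (intro conjI impI)
    assume H: "\<forall>i<n. \<forall>j<n. \<forall>k<n. x $ k < x $ j \<longrightarrow> A $$ (i,k) \<le> A $$ (i,j)"
    have zrA: "A $$ (i,k) = 0" if "i<n" "k<n" "x $ i = 0" for i k
    proof -
      have "(\<Sum>j<n. A $$ (i,j) * x $ j) = 0" using Axi[OF that(1)] that(3) by simp
      then have z: "\<forall>j\<in>{..<n}. A $$ (i,j) * x $ j = 0"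
        using Ann[OF that(1)] xnn by (subst sum_nonneg_eq_0_iff[symmetric]) auto
      have "A $$ (i,j0) = 0" using z j0 by auto
      show ?thesis
      proof (cases "x $ k = 0")
        case True
        then have "A $$ (i,k) \<le> A $$ (i,j0)" using H that j0 by auto
        then show ?thesis using \<open>A $$ (i,j0) = 0\<close> Ann[OF that(1,2)] by simp
      next
        case False then show ?thesis using z that by auto
      qed
    qed
    have le: "rho B \<le> rho A" if B: "B \<in> Omega n A" for B
    proof (rule rho_le[OF _ Bnn[OF B] x(1) xnn j0])
      show "B \<in> carrier_mat n n" using Om[OF B] by simp
      show "(B *\<^sub>v x) $ i \<le> rho A * x $ i" if i: "i < n" for i
      proof -
        obtain \<phi> where \<phi>: "\<phi> permutes {..<n}" "(B *\<^sub>v x) $ i = (\<Sum>j<n. A $$ (i, \<phi> j) * x $ j)"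
          using Bxi[OF B i] by auto
        have "(\<Sum>j<n. A $$ (i, \<phi> j) * x $ j) \<le> (\<Sum>j<n. A $$ (i, j) * x $ j)"
          by (rule rearr[OF _ \<phi>(1), where f="\<lambda>j. A $$ (i,j)" and g="\<lambda>j. x $ j"]) (use H i in auto)
        then show ?thesis using \<phi>(2) Axi[OF i] by simp
      qed
      show "B $$ (i,j) = 0" if i: "i<n" and j: "j<n" and xi: "x $ i = 0" for i j
      proof -
        obtain \<phi> where p: "\<phi> permutes {..<n}" "\<forall>j<n. B $$ (i,j) = A $$ (i, \<phi> j)"
          using Om[OF B] i by auto
        have "\<phi> j < n" using permutes_in_image[OF p(1), of j] j by simp
        then show ?thesis using zrA[OF i _ xi] j p by simp
      qed
    qed
    show "rho A = Max (rho ` Omega n A)"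
      by (rule Max_eqI[symmetric, OF finO]) (use le Aom in auto)
  next
    assume H: "\<forall>i<n. \<forall>j<n. \<forall>k<n. x $ k < x $ j \<longrightarrow> A $$ (i,k) \<ge> A $$ (i,j)"
    have ge: "rho A \<le> rho B" if B: "B \<in> Omega n A" for B
    proof (rule rho_ge[OF _ Bnn[OF B] x(1) xnn j0])
      show "B \<in> carrier_mat n n" using Om[OF B] by simp
      show "rho A * x $ i \<le> (B *\<^sub>v x) $ i" if i: "i < n" for i
      proof -
        obtain \<phi> where \<phi>: "\<phi> permutes {..<n}" "(B *\<^sub>v x) $ i = (\<Sum>j<n. A $$ (i, \<phi> j) * x $ j)"
          using Bxi[OF B i] by auto
        have "(\<Sum>j<n. - A $$ (i, \<phi> j) * x $ j) \<le> (\<Sum>j<n. - A $$ (i, j) * x $ j)"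
          by (rule rearr[OF _ \<phi>(1), where f="\<lambda>j. - A $$ (i,j)" and g="\<lambda>j. x $ j"]) (use H i in auto)
        then have "(\<Sum>j<n. A $$ (i, j) * x $ j) \<le> (\<Sum>j<n. A $$ (i, \<phi> j) * x $ j)"
          by (simp add: sum_negf)
        then show ?thesis using \<phi>(2) Axi[OF i] by simp
      qed
    qed
    show "rho A = Min (rho ` Omega n A)"
      by (rule Min_eqI[symmetric, OF finO]) (use ge Aom in auto)
  qed
qed


end
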